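(* Let $a_0=0$ and let $a_1<a_2<a_3<\cdots$ be the increasing enumeration of $\mathcal{A}=\{m\ge1:\ c_m=1\}$. Let $(b_n)_{n\ge0}$ be defined by $b_0=0$, $b_{2n}=4b_n$, $b_{2n+1}=4b_n+2$. Then for every integer $k\ge 0$ and every $r\in\{-1,0,1,2\}$ with $4k+r\ge 0$, $$a_{4k+r}=4b_k+r.$$
   Context: For $n\in\mathbb{N}$ let $s_2(n)$ be the sum of the binary digits of $n$ and $t_n=s_2(n)\bmod 2$ (the Prouhet–Thue–Morse sequence). Let $F(X)=\sum_{n\ge1}t_nX^n\in\mathbb{F}_2[[X]]$ and let $G(X)=\sum_{n\ge1}c_nX^n\in\mathbb{F}_2[[X]]$ be its compositional inverse, i.e. $F(G(X))=G(F(X))=X$. The $c_n$ are identified with integers in $\{0,1\}$. Note that $b_n$ is the integer whose base-4 expansion is obtained from the binary expansion of $n$ by replacing each digit $1$ by $2$. *)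

theory Defs
  imports "HOL-Computational_Algebra.Formal_Power_Series" "HOL-Library.Z2" "HOL-Library.Infinite_Set"
begin

fun s2 :: "nat \<Rightarrow> nat" where
  "s2 n = (if n = 0 then 0 else n mod 2 + s2 (n div 2))"

definition tm :: "nat \<Rightarrow> bit" where
  "tm n = of_nat (s2 n mod 2)"

definition TM_F :: "bit fps" where
  "TM_F = Abs_fps (\<lambda>n. if n = 0 then 0 else tm n)"

definition TM_G :: "bit fps" where
  "TM_G = fps_inv TM_F"

definition cc :: "nat \<Rightarrow> nat" where
  "cc n = (if fps_nth TM_G n = 1 then 1 else 0)"

definition AA :: "nat set" where
  "AA = {m. m \<ge> 1 \<and> cc m = 1}"

definition aa :: "nat \<Rightarrow> nat" where
  "aa n = (if n = 0 then 0 else enumerate AA (n - 1))"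

fun bb :: "nat \<Rightarrow> nat" where
  "bb n = (if n = 0 then 0 else 4 * bb (n div 2) + 2 * (n mod 2))"

end

theory Submission
  imports Defs
begin
unbundle fps_syntax



lemma sym_sum_aux:
  fixes h :: "nat \<Rightarrow> bit"
  shows "\<forall>lo. (\<forall>i. lo \<le> i \<and> i \<le> lo + d \<longrightarrow> h i = h (2*lo+d-i)) \<longrightarrow>
    sum h {lo..lo+d} = (if even d then h (lo + d div 2) else 0)"
proof (induction d rule: less_induct)
  case (less d)
  show ?case
  proof (intro allI impI)
    fix lo assume H: "\<forall>i. lo \<le> i \<and> i \<le> lo + d \<longrightarrow> h i = h (2*lo+d-i)"
    consider "d = 0" | "d = 1" | e where "d = Suc (Suc e)"
      by (metis One_nat_def not0_implies_Suc)
    then show "sum h {lo..lo+d} = (if even d then h (lo + d div 2) else 0)"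
    proof cases
      case 1 then show ?thesis by simp
    next
      case 2
      have "h lo = h (lo+1)" using H[rule_format, of lo] 2 by simp
      then show ?thesis using 2 by (simp add: sum.atLeast_Suc_atMost)
    next
      case 3
      have IH: "sum h {Suc lo..Suc lo+e} = (if even e then h (Suc lo + e div 2) else 0)"
      proof -
        have "\<forall>i. Suc lo \<le> i \<and> i \<le> Suc lo + e \<longrightarrow> h i = h (2*Suc lo+e-i)"
        proof (intro allI impI)
          fix i assume "Suc lo \<le> i \<and> i \<le> Suc lo + e"
          then have "lo \<le> i \<and> i \<le> lo + d" and "2*lo+d-i = 2*Suc lo+e-i" using 3 by auto
          then show "h i = h (2*Suc lo+e-i)" using H by metis
        qed
        moreover have "e < d" using 3 by simp
        ultimately show ?thesis using less by blast
      qed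
      have e1: "h lo = h (lo + d)" using H[rule_format, of lo] 3 by simp
      have "sum h {lo..lo+d} = h lo + sum h {Suc lo..lo+d}"
        by (simp add: sum.atLeast_Suc_atMost)
      also have "sum h {Suc lo..lo+d} = sum h {Suc lo..Suc lo+e} + h (lo+d)"
        using 3 by simp
      finally have "sum h {lo..lo+d} = sum h {Suc lo..Suc lo+e} + (h lo + h lo)"
        by (simp only: e1 ac_simps)
      also have "h lo + h lo = 0" by (cases "h lo") simp_all
      finally show ?thesis using IH 3 by simp
    qed
  qed
qed

lemma sym_sum:
  fixes h :: "nat \<Rightarrow> bit"
  assumes "\<And>i. i \<le> n \<Longrightarrow> h i = h (n - i)"
  shows "sum h {0..n} = (if even n then h (n div 2) else 0)"
proof -
  have "\<forall>i. 0 \<le> i \<and> i \<le> 0 + n \<longrightarrow> h i = h (2*0+n-i)"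
    using assms by (metis add_0 mult_0_right)
  then show ?thesis using sym_sum_aux[of n h] by (metis add_0)
qed

definition sq2 :: "bit fps \<Rightarrow> bit fps" where
  "sq2 f = Abs_fps (\<lambda>n. if even n then f $ (n div 2) else 0)"

lemma frob: "f * f = sq2 f"
proof (rule fps_ext)
  fix n
  have "(f*f) $ n = (\<Sum>i=0..n. f$i * f$(n - i))" by (rule fps_mult_nth)
  also have "\<dots> = (if even n then f$(n div 2) * f$(n - n div 2) else 0)"
    by (rule sym_sum) (simp add: mult.commute)
  also have "\<dots> = sq2 f $ n" 
    by (cases "f $ (n div 2)") (auto simp: sq2_def elim!: evenE)
  finally show "(f*f) $ n = sq2 f $ n" .
qed



declare bb.simps[simp del] s2.simps[simp del]

lemma s2_0[simp]: "s2 0 = 0" by (simp add: s2.simps)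
lemma s2_even: "s2 (2*m) = s2 m"
  by (cases "m = 0") (simp_all add: s2.simps[of "2*m"])
lemma s2_odd: "s2 (Suc (2*m)) = Suc (s2 m)"
  by (subst s2.simps) simp

lemma of_nat_bit: "(of_nat n :: bit) = (if even n then 0 else 1)"
  by (induction n) auto

lemma tm_0[simp]: "tm 0 = 0" by (simp add: tm_def)
lemma tm_even: "tm (2*m) = tm m" by (simp add: tm_def s2_even)
lemma tm_odd: "tm (Suc (2*m)) = 1 + tm m"
  by (simp add: tm_def s2_odd of_nat_bit mod_Suc even_iff_mod_2_eq_zero)

lemma TM_F_nth: "TM_F $ n = tm n" by (simp add: TM_F_def)

lemma two_fps_bit: "(2::bit fps) = 0"
  by (simp add: fps_eq_iff fps_numeral_nth)

lemma sq_1X: "(1 + fps_X :: bit fps)^2 = 1 + fps_X^2"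
proof -
  have "(1 + fps_X :: bit fps)^2 = 1 + 2 * fps_X + fps_X^2" by algebra
  then show ?thesis by (simp add: two_fps_bit)
qed

definition QQ :: "bit fps" where "QQ = Abs_fps (\<lambda>n. if odd n then 1 else 0)"

lemma QQ_eq: "(1 + fps_X^2) * QQ = fps_X"
proof (rule fps_ext)
  fix n
  show "((1 + fps_X^2) * QQ) $ n = fps_X $ n"
  proof (cases "n < 2")
    case True
    then have "n = 0 \<or> n = 1" by auto
    then show ?thesis by (auto simp: QQ_def distrib_right fps_X_power_mult_nth fps_X_nth)
  next
    case False
    then have "odd (n - 2) = odd n" by (simp add: even_diff_nat)
    then show ?thesis using False by (auto simp: QQ_def distrib_right fps_X_power_mult_nth fps_X_nth)
  qed
qed

lemma F_eq1: "TM_F = (1 + fps_X) * sq2 TM_F + QQ"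
proof (rule fps_ext)
  fix n
  show "TM_F $ n = ((1 + fps_X) * sq2 TM_F + QQ) $ n"
  proof (cases "even n")
    case True
    then obtain m where m: "n = 2*m" by (auto elim: evenE)
    have l: "TM_F $ n = tm m" using m by (simp add: TM_F_nth tm_even)
    show ?thesis
    proof (cases m)
      case 0 then show ?thesis using m l by (simp add: sq2_def QQ_def distrib_right)
    next
      case (Suc j)
      have "TM_F $ m = tm m" by (simp add: TM_F_nth)
      then show ?thesis using m l Suc by (simp add: sq2_def QQ_def distrib_right)
    qed
  next
    case False
    then obtain m where m: "n = 2*m+1" by (auto elim: oddE)
    show ?thesis using m
      by (auto simp: distrib_right sq2_def QQ_def TM_F_nth tm_odd)
  qed
qed

lemma F_eq: "(1 + fps_X)^2 * TM_F = (1 + fps_X)^3 * TM_F^2 + fps_X"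
proof -
  have "(1 + fps_X)^2 * TM_F = (1 + fps_X)^2 * ((1 + fps_X) * sq2 TM_F + QQ)"
    using F_eq1 by simp
  also have "\<dots> = (1 + fps_X)^3 * sq2 TM_F + (1 + fps_X^2) * QQ"
  proof -
    have "(1 + fps_X)^2 * ((1 + fps_X) * sq2 TM_F + QQ) = (1 + fps_X)^3 * sq2 TM_F + (1 + fps_X)^2 * QQ"
      by algebra
    then show ?thesis by (simp only: sq_1X)
  qed
  also have "\<dots> = (1 + fps_X)^3 * TM_F^2 + fps_X"
    by (simp only: QQ_eq, simp add: power2_eq_square frob)
  finally show ?thesis .
qed




lemma bb_eq: "bb k = 4 * bb (k div 2) + 2 * (k mod 2)"
  by (cases "k = 0") (simp_all add: bb.simps[of k] bb.simps[of 0])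

lemma bb_0[simp]: "bb 0 = 0" by (simp add: bb.simps)

definition BS :: "nat set" where "BS = range bb"

lemma BS_iff: "n \<in> BS \<longleftrightarrow> (4 dvd n \<and> n div 4 \<in> BS) \<or> (n mod 4 = 2 \<and> n div 4 \<in> BS)"
proof
  assume "n \<in> BS"
  then obtain k where k: "n = bb k" by (auto simp: BS_def)
  show "(4 dvd n \<and> n div 4 \<in> BS) \<or> (n mod 4 = 2 \<and> n div 4 \<in> BS)"
  proof (cases "even k")
    case True
    then have "n = 4 * bb (k div 2)" using k bb_eq[of k] by simp
    then show ?thesis by (auto simp: BS_def)
  next
    case False
    then have n: "n = 4 * bb (k div 2) + 2" using k bb_eq[of k] by (simp add: odd_iff_mod_2_eq_one)
    then have "n mod 4 = 2" "n div 4 = bb (k div 2)" by presburger+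
    then show ?thesis by (auto simp: BS_def)
  qed
next
  assume "(4 dvd n \<and> n div 4 \<in> BS) \<or> (n mod 4 = 2 \<and> n div 4 \<in> BS)"
  then show "n \<in> BS"
  proof
    assume h: "4 dvd n \<and> n div 4 \<in> BS"
    then obtain m where m: "n div 4 = bb m" by (auto simp: BS_def)
    have "bb (2*m) = n" using bb_eq[of "2*m"] m h by auto
    then show ?thesis by (auto simp: BS_def)
  next
    assume h: "n mod 4 = 2 \<and> n div 4 \<in> BS"
    then obtain m where m: "n div 4 = bb m" by (auto simp: BS_def)
    have "bb (2*m+1) = 4 * bb m + 2" using bb_eq[of "2*m+1"] by simp
    also have "\<dots> = n" using m h div_mult_mod_eq[of n 4] by linarith
    finally have "bb (2*m+1) = n" .
    then show ?thesis by (auto simp: BS_def)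
  qed
qed

lemma BS_even: "n \<in> BS \<Longrightarrow> even n"
proof -
  assume "n \<in> BS"
  then have "4 dvd n \<or> n mod 4 = 2" using BS_iff[of n] by blast
  then show "even n" by presburger
qed

definition BB :: "bit fps" where "BB = Abs_fps (\<lambda>n. if n \<in> BS then 1 else 0)"

lemma BB_0: "BB $ 0 = 1"
  by (auto simp: BB_def BS_def intro: range_eqI[of _ _ 0])

lemma BB_eq: "BB = (1 + fps_X^2) * sq2 (sq2 BB)"
proof (rule fps_ext)
  fix n
  have s4: "sq2 (sq2 BB) $ m = (if 4 dvd m then BB $ (m div 4) else 0)" for m
    by (auto simp: sq2_def elim!: evenE)
  show "BB $ n = ((1 + fps_X^2) * sq2 (sq2 BB)) $ n"
  proof (cases "n < 2")
    case True
    then show ?thesis using BS_iff[of n] s4[of n]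
      by (auto simp: distrib_right fps_X_power_mult_nth BB_def)
  next
    case False
    have a: "4 dvd (n - 2) \<longleftrightarrow> n mod 4 = 2" using False by presburger
    have b: "4 dvd (n - 2) \<Longrightarrow> (n - 2) div 4 = n div 4" using False by presburger
    have c: "4 dvd n \<Longrightarrow> \<not> 4 dvd (n - 2)" using False by presburger
    show ?thesis using BS_iff[of n] s4[of n] s4[of "n-2"] False a b c
      by (auto simp: distrib_right fps_X_power_mult_nth BB_def)
  qed
qed

lemma BB_pow4: "BB^4 = sq2 (sq2 BB)"
proof -
  have "BB^4 = (BB*BB)*(BB*BB)" by algebra
  then show ?thesis by (simp add: frob)
qed

lemma BB_cube: "(1 + fps_X)^2 * BB^3 = 1"
proof -
  have e1: "BB * ((1 + fps_X)^2 * BB^3 - 1) = (1 + fps_X)^2 * BB^4 - BB"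
    by algebra
  have e2: "(1 + fps_X^2) * BB^4 = BB" using BB_eq BB_pow4 by metis
  have "BB * ((1 + fps_X)^2 * BB^3 - 1) = 0" using e1 e2 by (simp only: sq_1X) simp
  moreover have "BB \<noteq> 0" using BB_0 by auto
  ultimately show ?thesis by simp
qed




definition WW :: "bit fps" where "WW = (1 + fps_X) * (BB - 1)"
definition GG :: "bit fps" where "GG = fps_shift 1 WW"

lemma bb_1: "bb 1 = 2" using bb_eq[of 1] by simp

lemma BB_nth: "BB $ n = (if n \<in> BS then 1 else 0)" by (simp add: BB_def)

lemma one_notin_BS: "1 \<notin> BS" using BS_even by fastforce
lemma two_in_BS: "2 \<in> BS" using bb_1 by (auto simp: BS_def intro: range_eqI[of _ _ 1])

lemma WW_0: "WW $ 0 = 0" by (simp add: WW_def BB_0)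

lemma X_GG: "fps_X * GG = WW"
  by (rule fps_ext) (simp add: GG_def WW_0)

lemma GG_nth: "GG $ n = WW $ Suc n" by (simp add: GG_def)

lemma WW_Suc: "WW $ Suc n = (BB - 1) $ Suc n + (BB - 1) $ n"
  by (simp add: WW_def distrib_right)

lemma GG_0: "GG $ 0 = 0"
  using one_notin_BS BB_0 by (simp add: GG_nth WW_Suc BB_nth)

lemma GG_1: "GG $ 1 = 1"
  using one_notin_BS two_in_BS by (simp add: GG_nth WW_Suc BB_nth numeral_2_eq_2)

lemma TMF_0: "TM_F $ 0 = 0" by (simp add: TM_F_nth)
lemma TMF_1: "TM_F $ 1 = 1"
  using tm_odd[of 0] by (simp add: TM_F_nth)

lemma X_eq: "(1 + GG)^2 * fps_X = (1 + GG)^3 * fps_X^2 + GG"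
proof -
  define p :: "bit fps" where "p = 1 + fps_X"
  define v where "v = fps_X + WW"
  have vv: "fps_X * (1 + GG) = v" by (simp add: v_def distrib_left X_GG)
  have E: "v^2 - v^3 - WW = - p*(p^2*BB^3 - 1) + 2*(2*p^2*BB^2 - 3*p*BB + 1)"
    unfolding v_def WW_def p_def by algebra
  have "p^2*BB^3 - 1 = 0" using BB_cube by (simp add: p_def)
  then have "v^2 - v^3 - WW = 0" using E two_fps_bit by simp
  then have E2: "v^2 = v^3 + WW" by (simp add: algebra_simps)
  have "fps_X * ((1 + GG)^2 * fps_X) = (fps_X * (1 + GG))^2" by algebra
  then have "fps_X * ((1 + GG)^2 * fps_X) = v^2" using vv by simp
  moreover have "fps_X * ((1 + GG)^3 * fps_X^2 + GG) = (fps_X * (1 + GG))^3 + fps_X * GG" by algebra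
  then have "fps_X * ((1 + GG)^3 * fps_X^2 + GG) = v^3 + WW" using vv X_GG by simp
  ultimately have "fps_X * ((1 + GG)^2 * fps_X) = fps_X * ((1 + GG)^3 * fps_X^2 + GG)"
    using E2 by simp
  then show ?thesis by simp
qed

lemma Y_eq: "(1 + GG)^2 * (TM_F oo GG) = (1 + GG)^3 * (TM_F oo GG)^2 + GG"
proof -
  have c1: "(1 + fps_X) oo GG = 1 + GG" using GG_0 by (simp add: fps_compose_add_distrib)
  have "((1 + fps_X)^2 * TM_F) oo GG = ((1 + fps_X)^3 * TM_F^2 + fps_X) oo GG"
    using F_eq by simp
  then show ?thesis using GG_0
    by (simp add: fps_compose_mult_distrib fps_compose_add_distrib fps_compose_power[symmetric] c1)
qed

lemma Y_is_X: "TM_F oo GG = fps_X"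
proof -
  define Y where "Y = TM_F oo GG"
  have Y0: "Y $ 0 = 0" by (simp add: Y_def TMF_0)
  have "(1 + GG)^2 * (Y - fps_X) * (1 - (1 + GG) * (Y + fps_X)) =
        ((1 + GG)^2 * Y - ((1 + GG)^3 * Y^2 + GG)) - ((1 + GG)^2 * fps_X - ((1 + GG)^3 * fps_X^2 + GG))"
    by algebra
  also have "\<dots> = 0" using X_eq Y_eq by (simp add: Y_def)
  finally have Z: "(1 + GG)^2 * (Y - fps_X) * (1 - (1 + GG) * (Y + fps_X)) = 0" .
  have n1: "(1 + GG)^2 \<noteq> 0"
  proof
    assume "(1 + GG)^2 = 0"
    then have "((1 + GG)^2) $ 0 = 0" by simp
    then show False using GG_0 by (simp add: power2_eq_square)
  qed
  have n2: "1 - (1 + GG) * (Y + fps_X) \<noteq> 0"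
  proof
    assume "1 - (1 + GG) * (Y + fps_X) = 0"
    then have "(1 - (1 + GG) * (Y + fps_X)) $ 0 = 0" by simp
    then show False using GG_0 Y0 by simp
  qed
  from Z n1 n2 have "Y - fps_X = 0" by simp
  then show ?thesis by (simp add: Y_def)
qed

lemma TM_G_eq: "TM_G = GG"
proof -
  have "TM_G = TM_G oo fps_X" by simp
  also have "\<dots> = TM_G oo (TM_F oo GG)" by (simp add: Y_is_X)
  also have "\<dots> = (TM_G oo TM_F) oo GG"
    using GG_0 TMF_0 by (simp add: fps_compose_assoc)
  also have "TM_G oo TM_F = fps_X" unfolding TM_G_def
    using fps_inv[of TM_F] TMF_0 TMF_1 by simp
  finally show ?thesis using GG_0 by simp
qed




lemma bb_Suc_gt: "bb n < bb (Suc n)"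
proof (induction n rule: less_induct)
  case (less n)
  show ?case
  proof (cases "even n")
    case True
    then obtain m where m: "n = 2*m" by (auto elim: evenE)
    have "bb n = 4 * bb m" using bb_eq[of n] m by simp
    moreover have "bb (Suc n) = 4 * bb m + 2" using bb_eq[of "Suc n"] m by simp
    ultimately show ?thesis by simp
  next
    case False
    then obtain m where m: "n = 2*m+1" by (auto elim: oddE)
    have "bb n = 4 * bb m + 2" using bb_eq[of n] m by simp
    moreover have "bb (Suc n) = 4 * bb (Suc m)" using bb_eq[of "Suc n"] m by simp
    moreover have "bb m < bb (Suc m)" using less m by simp
    ultimately show ?thesis by simp
  qed
qed

lemma bb_mono: "strict_mono bb"
  by (rule strict_mono_Suc_iff[THEN iffD2]) (simp add: bb_Suc_gt)

lemma bb_pos: "k \<ge> 1 \<Longrightarrow> bb k \<ge> 1"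
  using bb_mono[THEN strict_monoD, of 0 k] by simp

lemma cc_iff: "cc n = 1 \<longleftrightarrow> GG $ n = 1" by (simp add: cc_def TM_G_eq)

lemma GG_pos: "n \<ge> 1 \<Longrightarrow> GG $ n = 1 \<longleftrightarrow> (n \<in> BS \<or> Suc n \<in> BS)"
proof -
  assume n: "n \<ge> 1"
  have "\<not> (n \<in> BS \<and> Suc n \<in> BS)" using BS_even[of n] BS_even[of "Suc n"] by auto
  then show ?thesis using n by (auto simp: GG_nth WW_Suc BB_nth)
qed

lemma AA_eq: "AA = {m. m \<ge> 1 \<and> (m \<in> BS \<or> Suc m \<in> BS)}"
  unfolding AA_def using cc_iff GG_pos by auto

definition psi :: "nat \<Rightarrow> nat" where
  "psi n = (if n mod 4 = 3 then 4 * bb (n div 4 + 1) - 1 else 4 * bb (n div 4) + n mod 4)"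

lemma psi_Suc: "psi n < psi (Suc n)"
proof -
  define q where "q = n div 4"
  have n: "n = 4*q + n mod 4" by (simp add: q_def)
  have "n mod 4 < 4" by simp
  then consider "n mod 4 = 0" | "n mod 4 = 1" | "n mod 4 = 2" | "n mod 4 = 3" by linarith
  then show ?thesis
  proof cases
    case 1
    then have "Suc n mod 4 = 1" "Suc n div 4 = q" using n by presburger+
    then show ?thesis using 1 by (simp add: psi_def q_def)
  next
    case 2
    then have "Suc n mod 4 = 2" "Suc n div 4 = q" using n by presburger+
    then show ?thesis using 2 by (simp add: psi_def q_def)
  next
    case 3
    then have "Suc n mod 4 = 3" "Suc n div 4 = q" using n by presburger+
    moreover have "bb q < bb (q+1)" using bb_Suc_gt by simp
    ultimately show ?thesis using 3 by (simp add: psi_def q_def)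
  next
    case 4
    then have "Suc n mod 4 = 0" "Suc n div 4 = q + 1" using n by presburger+
    moreover have "bb (q+1) \<ge> 1" using bb_pos by simp
    ultimately show ?thesis using 4 by (simp add: psi_def q_def)
  qed
qed

lemma psi_mono: "strict_mono psi"
  by (rule strict_mono_Suc_iff[THEN iffD2]) (simp add: psi_Suc)

lemma BS_bb: "bb k \<in> BS" by (simp add: BS_def)



lemma psi_in_AA: "n \<ge> 1 \<Longrightarrow> psi n \<in> AA"
proof -
  assume n1: "n \<ge> 1"
  define q where "q = n div 4"
  have n: "n = 4*q + n mod 4" by (simp add: q_def)
  have "n mod 4 < 4" by simp
  then consider "n mod 4 = 0" | "n mod 4 = 1" | "n mod 4 = 2" | "n mod 4 = 3" by linarith
  then show ?thesis
  proof cases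
    case 1
    then have "q \<ge> 1" using n n1 by simp
    then have "psi n = bb (2*q)" "bb (2*q) \<ge> 1" using 1 bb_eq[of "2*q"] bb_pos[of "2*q"]
      by (simp_all add: psi_def q_def)
    then show ?thesis by (auto simp: AA_eq BS_bb)
  next
    case 2
    then have "Suc (psi n) = bb (2*q+1)" using bb_eq[of "2*q+1"] by (simp add: psi_def q_def)
    then show ?thesis using 2 by (auto simp: AA_eq BS_bb psi_def)
  next
    case 3
    then have "psi n = bb (2*q+1)" using bb_eq[of "2*q+1"] by (simp add: psi_def q_def)
    then show ?thesis using 3 by (auto simp: AA_eq BS_bb psi_def)
  next
    case 4
    have b: "bb (q+1) \<ge> 1" using bb_pos by simp
    have "bb (2*(q+1)) = 4 * bb (q+1)" using bb_eq[of "2*(q+1)"] by simp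
    then have "Suc (psi n) = bb (2*(q+1))" "psi n \<ge> 1" using 4 b by (simp_all add: psi_def q_def)
    then show ?thesis by (auto simp: AA_eq BS_bb)
  qed
qed



lemma AA_in_psi: "m \<in> AA \<Longrightarrow> \<exists>n\<ge>1. psi n = m"
proof -
  assume "m \<in> AA"
  then have m1: "m \<ge> 1" and mb: "m \<in> BS \<or> Suc m \<in> BS" by (auto simp: AA_eq)
  from mb show ?thesis
  proof
    assume "m \<in> BS"
    then obtain k where k: "m = bb k" by (auto simp: BS_def)
    show ?thesis
    proof (cases "even k")
      case True
      then obtain q where q: "k = 2*q" by (auto elim: evenE)
      then have m4: "m = 4 * bb q" using k bb_eq[of k] by simp
      then have "q \<ge> 1" using m1 by (cases q) auto
      have "psi (4*q) = m" using m4 by (simp add: psi_def)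
      then show ?thesis using \<open>q \<ge> 1\<close> by (intro exI[of _ "4*q"]) simp
    next
      case False
      then obtain q where q: "k = 2*q+1" by (auto elim: oddE)
      then have m4: "m = 4 * bb q + 2" using k bb_eq[of k] by simp
      have "(4*q+2) mod 4 = 2" "(4*q+2) div 4 = q" by presburger+
      then have "psi (4*q+2) = m" using m4 by (simp add: psi_def)
      then show ?thesis by (intro exI[of _ "4*q+2"]) simp
    qed
  next
    assume "Suc m \<in> BS"
    then obtain k where k: "Suc m = bb k" by (auto simp: BS_def)
    show ?thesis
    proof (cases "even k")
      case True
      then obtain q where q: "k = 2*q" by (auto elim: evenE)
      then have m4: "Suc m = 4 * bb q" using k bb_eq[of k] by simp
      then obtain q' where q': "q = Suc q'" by (cases q) auto
      have "(4*q'+3) mod 4 = 3" "(4*q'+3) div 4 = q'" by presburger+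
      then have "psi (4*q'+3) = m" using m4 q' by (simp add: psi_def)
      then show ?thesis by (intro exI[of _ "4*q'+3"]) simp
    next
      case False
      then obtain q where q: "k = 2*q+1" by (auto elim: oddE)
      then have m4: "Suc m = 4 * bb q + 2" using k bb_eq[of k] by simp
      have "(4*q+1) mod 4 = 1" "(4*q+1) div 4 = q" by presburger+
      then have "psi (4*q+1) = m" using m4 by (simp add: psi_def)
      then show ?thesis by (intro exI[of _ "4*q+1"]) simp
    qed
  qed
qed



lemma strict_mono_range_eq:
  fixes f g :: "nat \<Rightarrow> nat"
  assumes f: "strict_mono f" and g: "strict_mono g" and r: "range f = range g"
  shows "f = g"
proof
  fix n
  show "f n = g n"
  proof (induction n rule: less_induct)
    case (less n)
    have "f n \<in> range g" using r by auto
    then obtain m where m: "g m = f n" by auto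
    have "\<not> m < n"
    proof
      assume "m < n"
      then have "f m = f n" using less m by simp
      then show False using \<open>m < n\<close> f by (simp add: strict_mono_eq)
    qed
    then have 1: "g n \<le> f n" using m g by (metis not_le strict_mono_less_eq)
    have "g n \<in> range f" using r by auto
    then obtain l where l: "f l = g n" by auto
    have "\<not> l < n"
    proof
      assume "l < n"
      then have "g l = g n" using less l by simp
      then show False using \<open>l < n\<close> g by (simp add: strict_mono_eq)
    qed
    then have 2: "f n \<le> g n" using l f by (metis not_le strict_mono_less_eq)
    show ?case using 1 2 by simp
  qed
qed



lemma enum_AA: "enumerate AA j = psi (Suc j)"
proof -
  define phi where "phi = (\<lambda>j. psi (Suc j))"
  have sm: "strict_mono phi" using psi_mono by (simp add: phi_def strict_mono_def)
  have r: "range phi = AA"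
  proof
    show "range phi \<subseteq> AA" using psi_in_AA by (auto simp: phi_def)
    show "AA \<subseteq> range phi"
    proof
      fix m assume "m \<in> AA"
      then obtain n where "n \<ge> 1" "psi n = m" using AA_in_psi by blast
      then have "phi (n - 1) = m" by (simp add: phi_def)
      then show "m \<in> range phi" by (metis rangeI)
    qed
  qed
  have inf: "infinite AA" using r sm range_inj_infinite strict_mono_imp_inj_on by metis
  have "strict_mono (enumerate AA)" using inf by (simp add: strict_mono_def)
  moreover have "range (enumerate AA) = AA" using inf by (rule range_enumerate)
  ultimately have "enumerate AA = phi" using sm r strict_mono_range_eq by metis
  then show ?thesis by (simp add: phi_def)
qed




theorem mainTheorem5:
  fixes k :: nat and r :: int
  assumes "r \<in> {-1, 0, 1, 2}" and "4 * int k + r \<ge> 0"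
  shows "int (aa (nat (4 * int k + r))) = 4 * int (bb k) + r"
proof -
  define n where "n = nat (4 * int k + r)"
  have intn: "int n = 4 * int k + r" using assms(2) by (simp add: n_def)
  have rc: "r = -1 \<or> r = 0 \<or> r = 1 \<or> r = 2" using assms(1) by simp
  show ?thesis unfolding n_def[symmetric]
  proof (cases "n = 0")
    case True
    then have "k = 0 \<and> r = 0" using intn rc by presburger
    then show "int (aa n) = 4 * int (bb k) + r" using True by (simp add: aa_def)
  next
    case False
    have aan: "aa n = psi n" using False by (simp add: aa_def enum_AA)
    from rc consider "r = -1" | "r = 0" | "r = 1" | "r = 2" by blast
    then show "int (aa n) = 4 * int (bb k) + r"
    proof cases
      case 1
      then have k1: "k \<ge> 1" using False intn by presburger
      have n3: "n = 4*(k-1) + 3" using intn 1 k1 by presburger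
      have m3: "n mod 4 = 3" using n3 by simp
      have "n div 4 = k - 1" using n3 by simp
      then have "n div 4 + 1 = k" using k1 by simp
      note m3 this
      then have "psi n = 4 * bb k - 1" by (simp add: psi_def)
      moreover have "bb k \<ge> 1" using bb_pos k1 by simp
      ultimately have "int (psi n) = 4 * int (bb k) - 1" by (simp add: of_nat_diff)
      then show "int (aa n) = 4 * int (bb k) + r" using aan 1 by simp
    next
      case 2
      then have "n = 4*k" using intn by presburger
      then have "psi n = 4 * bb k" by (simp add: psi_def)
      then show "int (aa n) = 4 * int (bb k) + r" using aan 2 by simp
    next
      case 3
      then have "n = 4*k + 1" using intn by presburger
      then have "n mod 4 = 1" "n div 4 = k" by presburger+
      then have "psi n = 4 * bb k + 1" by (simp add: psi_def)
      then show "int (aa n) = 4 * int (bb k) + r" using aan 3 by simp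
    next
      case 4
      then have "n = 4*k + 2" using intn by presburger
      then have "n mod 4 = 2" "n div 4 = k" by presburger+
      then have "psi n = 4 * bb k + 2" by (simp add: psi_def)
      then show "int (aa n) = 4 * int (bb k) + r" using aan 4 by simp
    qed
  qed
qed


end
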